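(* Let $\epsilon>0$ and $n\ge1$. Consider mechanisms $Q:\mathbb{R}^n\to\Delta(\mathbb{R}^n)$ of the form $Qu=u+V$, where the noise $V$ has distribution $g\in\Delta(\mathbb{R}^n)$ independent of the input $u$, and suppose $Q$ is $\epsilon$-Lipschitz private with respect to the $\ell_1$-norm on $\mathbb{R}^n$. Then $$\mathbb{E}_{V\sim g}\|V\|_2^2\;\ge\;\mathbb{E}_{V\sim l_1^n}\|V\|_2^2=\frac{2n}{\epsilon^2},$$ where $l_1^n(v)=\left(\frac{\epsilon}{2}\right)^n e^{-\epsilon\|v\|_1}$; i.e. the Laplace mechanism adding noise with density $l_1^n$ minimizes the mean-squared error for the identity query $q(u)=u$ among all such mechanisms.
   Context: $\Delta(\mathcal{Y})$ denotes the set of Borel probability measures on $\mathcal{Y}$. For a normed space $(\mathcal{U},\|\cdot\|)$, a mechanism $Q:\mathcal{U}\to\Delta(\mathcal{Y})$ is $\epsilon$-Lipschitz private if for all $u,u'\in\mathcal{U}$ and all measurable $\mathcal{S}\subseteq\mathcal{Y}$, $|\ln\mathbb{P}(Qu\in\mathcal{S})-\ln\mathbb{P}(Qu'\in\mathcal{S})|\le\epsilon\|u-u'\|$, equivalently $\mathbb{P}(Qu\in\mathcal{S})\le e^{\epsilon\|u-u'\|}\mathbb{P}(Qu'\in\mathcal{S})$. *)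

theory Defs
  imports "HOL-Probability.Probability"
begin

definition l1_norm :: "real ^ 'n \<Rightarrow> real" where
  "l1_norm x = (\<Sum>i\<in>UNIV. \<bar>x $ i\<bar>)"

definition lipschitz_private ::
  "real \<Rightarrow> ('u::ab_group_add \<Rightarrow> real) \<Rightarrow> 'y measure \<Rightarrow> ('u \<Rightarrow> 'y measure) \<Rightarrow> bool" where
  "lipschitz_private eps nrm Y Q \<longleftrightarrow>
     (\<forall>u u' S. S \<in> sets Y \<longrightarrow> measure (Q u) S \<le> exp (eps * nrm (u - u')) * measure (Q u') S)"

definition additive_mech :: "(real ^ 'n) measure \<Rightarrow> real ^ 'n \<Rightarrow> (real ^ 'n) measure" where
  "additive_mech g u = distr g borel (\<lambda>v. u + v)"

definition laplace_density :: "real \<Rightarrow> real ^ 'n \<Rightarrow> real" where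
  "laplace_density eps v = (eps / 2) ^ CARD('n) * exp (- eps * l1_norm v)"

end

theory Submission
  imports Defs
begin


lemma even_nn_integral:
  fixes h :: "real \<Rightarrow> ennreal"
  assumes [measurable]: "h \<in> borel_measurable borel" and ev: "\<And>t. h (-t) = h t"
  shows "(\<integral>\<^sup>+ t. h t \<partial>lborel) = 2 * (\<integral>\<^sup>+ t. h t * indicator {0..} t \<partial>lborel)"
proof -
  have "(\<integral>\<^sup>+ t. h t \<partial>lborel) = (\<integral>\<^sup>+ t. h t * indicator {0..} t + h (-t) * indicator {0..} (-t) \<partial>lborel)"
    apply (rule nn_integral_cong_AE)
    using AE_lborel_singleton[of 0] by eventually_elim (auto simp: ev split: split_indicator)
  also have "\<dots> = (\<integral>\<^sup>+ t. h t * indicator {0..} t \<partial>lborel) + (\<integral>\<^sup>+ t. h (-t) * indicator {0..} (-t) \<partial>lborel)"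
    by (rule nn_integral_add) auto
  also have "(\<integral>\<^sup>+ t. h (-t) * indicator {0..} (-t) \<partial>lborel) = (\<integral>\<^sup>+ t. h t * indicator {0..} t \<partial>distr lborel borel uminus)"
    by (subst nn_integral_distr) auto
  also have "\<dots> = (\<integral>\<^sup>+ t. h t * indicator {0..} t \<partial>lborel)"
    by (simp add: lborel_distr_uminus)
  finally show ?thesis by (simp add: mult_2)
qed

lemma half_moment:
  fixes eps :: real and i :: nat
  assumes "eps > 0"
  shows "(\<integral>\<^sup>+ t. ennreal (eps * exp (- eps * t) * t ^ i) * indicator {0..} t \<partial>lborel) = fact i / eps ^ i"
proof -
  have "(\<integral>\<^sup>+ t. ennreal (eps * exp (- eps * t) * t ^ i) * indicator {0..} t \<partial>lborel)
     = (\<integral>\<^sup>+ t. ennreal (erlang_density 0 eps t * t ^ i) \<partial>lborel)"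
    by (intro nn_integral_cong) (auto simp: erlang_density_def split: split_indicator)
  also have "\<dots> = fact i / eps ^ i" using nn_integral_erlang_ith_moment[OF assms, of 0 i] by simp
  finally show ?thesis .
qed



lemma lap1d:
  fixes eps :: real assumes e: "eps > 0" and ek: "even k"
  shows "(\<integral>\<^sup>+ t. ennreal (eps / 2 * exp (- eps * \<bar>t\<bar>) * t ^ k) \<partial>lborel) = fact k / eps ^ k"
proof -
  have "(\<integral>\<^sup>+ t. ennreal (eps / 2 * exp (- eps * \<bar>t\<bar>) * t ^ k) \<partial>lborel)
      = 2 * (\<integral>\<^sup>+ t. ennreal (eps / 2 * exp (- eps * \<bar>t\<bar>) * t ^ k) * indicator {0..} t \<partial>lborel)"
    by (rule even_nn_integral) (auto simp: ek)
  also have "(\<integral>\<^sup>+ t. ennreal (eps / 2 * exp (- eps * \<bar>t\<bar>) * t ^ k) * indicator {0..} t \<partial>lborel)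
     = (\<integral>\<^sup>+ t. ennreal (1/2) * (ennreal (eps * exp (- eps * t) * t ^ k) * indicator {0..} t) \<partial>lborel)"
  proof (intro nn_integral_cong)
    fix t :: real
    show "ennreal (eps / 2 * exp (- eps * \<bar>t\<bar>) * t ^ k) * indicator {0..} t =
         ennreal (1 / 2) * (ennreal (eps * exp (- eps * t) * t ^ k) * indicator {0..} t)"
    proof (cases "t \<ge> 0")
      case True
      have "eps / 2 * exp (- eps * \<bar>t\<bar>) * t ^ k = (1/2) * (eps * exp (- eps * t) * t ^ k)"
        using True by simp
      moreover have "0 \<le> eps * exp (- eps * t) * t ^ k" using True e by simp
      ultimately have "ennreal (eps / 2 * exp (- eps * \<bar>t\<bar>) * t ^ k) = ennreal (1/2) * ennreal (eps * exp (- eps * t) * t ^ k)"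
        by (simp only: ennreal_mult[symmetric])
      then show ?thesis using True by (simp add: mult.assoc)
    qed simp
  qed
  also have "\<dots> = ennreal (1/2) * (\<integral>\<^sup>+ t. ennreal (eps * exp (- eps * t) * t ^ k) * indicator {0..} t \<partial>lborel)"
    by (rule nn_integral_cmult) auto
  also have "\<dots> = ennreal (1/2) * (fact k / eps ^ k)" using half_moment[OF e] by simp
  also have "(2::ennreal) * (ennreal (1/2) * (fact k / eps ^ k)) = (2 * ennreal (1/2)) * (fact k / eps ^ k)"
    by (simp only: mult.assoc)
  also have "(2 * ennreal (1/2)) = 1"
    by (metis ennreal_1 ennreal_mult' ennreal_numeral nonzero_mult_div_cancel_left times_divide_eq_right zero_le_numeral zero_neq_numeral)
  finally show ?thesis by simp
qed



lemma basis_real_vec: "(Basis :: (real ^ 'n) set) = range (\<lambda>j. axis j 1)"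
  unfolding Basis_vec_def by auto

lemma prod_basis_vec:
  fixes F :: "real ^ 'n \<Rightarrow> 'b::comm_monoid_mult"
  shows "(\<Prod>b\<in>(Basis :: (real ^ 'n) set). F b) = (\<Prod>j\<in>UNIV. F (axis j 1))"
  unfolding basis_real_vec
  by (subst prod.reindex) (auto simp: inj_on_def axis_eq_axis)

lemma laplace_coord:
  fixes eps :: real and i :: "'n::finite"
  assumes e: "eps > 0"
  shows "(\<integral>\<^sup>+ v. ennreal (laplace_density eps v * (v $ i)\<^sup>2) \<partial>(lborel :: (real ^ 'n) measure)) = ennreal (2 / eps\<^sup>2)"
proof -
  define f where "f b t = ennreal (eps / 2 * exp (- eps * \<bar>t\<bar>) * t ^ (if b = (axis i 1 :: real ^ 'n) then 2 else 0))" for b t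
  have "(\<integral>\<^sup>+ v. ennreal (laplace_density eps v * (v $ i)\<^sup>2) \<partial>(lborel :: (real ^ 'n) measure))
      = (\<integral>\<^sup>+ v. (\<Prod>b\<in>Basis. f b (v \<bullet> b)) \<partial>lborel)"
  proof (intro nn_integral_cong)
    fix v :: "real ^ 'n"
    have "(\<Prod>b\<in>Basis. f b (v \<bullet> b)) = (\<Prod>j\<in>UNIV. f (axis j 1) (v $ j))"
      by (simp add: prod_basis_vec inner_axis)
    also have "\<dots> = ennreal (\<Prod>j\<in>UNIV. eps / 2 * exp (- eps * \<bar>v $ j\<bar>) * (v $ j) ^ (if j = i then 2 else 0))"
      unfolding f_def using e by (subst prod_ennreal) (auto simp: axis_eq_axis)
    also have "(\<Prod>j\<in>UNIV. eps / 2 * exp (- eps * \<bar>v $ j\<bar>) * (v $ j) ^ (if j = i then 2 else 0))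
        = (\<Prod>j::'n\<in>UNIV. eps / 2) * (\<Prod>j\<in>UNIV. exp (- eps * \<bar>v $ j\<bar>)) * (\<Prod>j\<in>UNIV. (if j = i then (v $ j)^2 else 1))"
    proof -
      have "(\<Prod>j\<in>UNIV. eps / 2 * exp (- eps * \<bar>v $ j\<bar>) * (v $ j) ^ (if j = i then 2 else 0))
          = (\<Prod>j\<in>UNIV. eps / 2 * exp (- eps * \<bar>v $ j\<bar>) * (if j = i then (v $ j)^2 else 1))"
        by (rule prod.cong) auto
      also have "\<dots> = (\<Prod>j\<in>UNIV. eps / 2 * exp (- eps * \<bar>v $ j\<bar>)) * (\<Prod>j\<in>UNIV. (if j = i then (v $ j)^2 else 1))"
        by (rule prod.distrib)
      also have "(\<Prod>j\<in>UNIV. eps / 2 * exp (- eps * \<bar>v $ j\<bar>)) = (\<Prod>j::'n\<in>UNIV. eps / 2) * (\<Prod>j\<in>UNIV. exp (- eps * \<bar>v $ j\<bar>))"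
        by (rule prod.distrib)
      finally show ?thesis .
    qed
    also have "\<dots> = laplace_density eps v * (v $ i)\<^sup>2"
      by (simp add: laplace_density_def l1_norm_def exp_sum[symmetric] sum_negf sum_distrib_left)
    finally show "ennreal (laplace_density eps v * (v $ i)\<^sup>2) = (\<Prod>b\<in>Basis. f b (v \<bullet> b))" by simp
  qed
  also have "\<dots> = (\<Prod>b\<in>Basis. (\<integral>\<^sup>+x. f b x \<partial>lborel))"
    by (rule nn_integral_lborel_prod) (auto simp: f_def)
  also have "\<dots> = (\<Prod>b\<in>(Basis :: (real ^ 'n) set). (if b = axis i 1 then ennreal (2 / eps\<^sup>2) else 1))"
  proof (rule prod.cong[OF refl])
    fix b :: "real ^ 'n"
    show "(\<integral>\<^sup>+x. f b x \<partial>lborel) = (if b = axis i 1 then ennreal (2 / eps\<^sup>2) else 1)"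
      unfolding f_def using lap1d[OF e, of 2] lap1d[OF e, of 0]
      by (auto simp: power2_eq_square)
  qed
  also have "\<dots> = ennreal (2 / eps\<^sup>2)"
    by (subst prod.delta) (auto simp: basis_real_vec)
  finally show ?thesis .
qed



lemma laplace_density_measurable[measurable]:
  "laplace_density eps \<in> borel_measurable (borel :: (real ^ 'n) measure)"
  unfolding laplace_density_def l1_norm_def by measurable

lemma laplace_nonneg: "eps > 0 \<Longrightarrow> laplace_density eps v \<ge> 0"
  unfolding laplace_density_def by simp

lemma norm_sq_vec: "(norm (v :: real ^ 'n))\<^sup>2 = (\<Sum>i\<in>UNIV. (v $ i)\<^sup>2)"
  unfolding power2_norm_eq_inner inner_vec_def by (simp add: power2_eq_square)

lemma laplace_moment:
  fixes eps :: real assumes e: "eps > 0"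
  shows "(\<integral>\<^sup>+ v. ennreal ((norm v)\<^sup>2) \<partial>(density (lborel :: (real ^ 'n) measure) (\<lambda>v. ennreal (laplace_density eps v))))
           = ennreal (2 * real CARD('n) / eps\<^sup>2)"
proof -
  have "(\<integral>\<^sup>+ v. ennreal ((norm v)\<^sup>2) \<partial>(density (lborel :: (real ^ 'n) measure) (\<lambda>v. ennreal (laplace_density eps v))))
     = (\<integral>\<^sup>+ v. ennreal (laplace_density eps v) * ennreal ((norm v)\<^sup>2) \<partial>(lborel :: (real ^ 'n) measure))"
    by (subst nn_integral_density) auto
  also have "\<dots> = (\<integral>\<^sup>+ v. (\<Sum>i\<in>UNIV. ennreal (laplace_density eps v * (v $ i)\<^sup>2)) \<partial>(lborel :: (real ^ 'n) measure))"
  proof (intro nn_integral_cong)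
    fix v :: "real ^ 'n"
    have L: "laplace_density eps v \<ge> 0" using laplace_nonneg[OF e] .
    have "ennreal (laplace_density eps v) * ennreal ((norm v)\<^sup>2) = ennreal (laplace_density eps v * (norm v)\<^sup>2)"
      using L by (simp add: ennreal_mult)
    also have "laplace_density eps v * (norm v)\<^sup>2 = (\<Sum>i\<in>UNIV. laplace_density eps v * (v $ i)\<^sup>2)"
      by (simp add: norm_sq_vec sum_distrib_left)
    also have "ennreal \<dots> = (\<Sum>i\<in>UNIV. ennreal (laplace_density eps v * (v $ i)\<^sup>2))"
      using L by (subst sum_ennreal) auto
    finally show "ennreal (laplace_density eps v) * ennreal ((norm v)\<^sup>2) = (\<Sum>i\<in>UNIV. ennreal (laplace_density eps v * (v $ i)\<^sup>2))" .
  qed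
  also have "\<dots> = (\<Sum>i\<in>UNIV. (\<integral>\<^sup>+ v. ennreal (laplace_density eps v * (v $ i)\<^sup>2) \<partial>(lborel :: (real ^ 'n) measure)))"
    by (rule nn_integral_sum) auto
  also have "\<dots> = (\<Sum>i\<in>(UNIV :: 'n set). ennreal (2 / eps\<^sup>2))"
    by (intro sum.cong refl laplace_coord[OF e])
  also have "\<dots> = ennreal (2 * real CARD('n) / eps\<^sup>2)"
    using e by (simp add: ennreal_of_nat_eq_real_of_nat ennreal_mult[symmetric])
  finally show ?thesis .
qed



lemma mech_measure:
  fixes g :: "(real ^ 'n) measure"
  assumes g_sets: "sets g = sets borel" and S: "S \<in> sets borel"
  shows "measure (additive_mech g u) S = measure g {v. u + v \<in> S}"
proof -
  have sp: "space g = UNIV" using sets_eq_imp_space_eq[OF g_sets] by simp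
  have m: "(\<lambda>v. u + v) \<in> measurable g borel"
  proof -
    have "(\<lambda>v. u + v) \<in> borel_measurable (borel :: (real ^ 'n) measure)" by measurable
    then show ?thesis using measurable_cong_sets[OF g_sets refl] by metis
  qed
  show ?thesis unfolding additive_mech_def
    by (subst measure_distr[OF m S]) (simp add: sp vimage_def)
qed

lemma l1_norm_axis: "l1_norm (s *\<^sub>R axis i (1::real) :: real ^ 'n) = \<bar>s\<bar>"
proof -
  have "l1_norm (s *\<^sub>R axis i (1::real) :: real ^ 'n) = (\<Sum>j\<in>UNIV. if j = i then \<bar>s\<bar> else 0)"
    unfolding l1_norm_def by (rule sum.cong) (auto simp: axis_def)
  then show ?thesis by simp
qed

lemma l1_norm_uminus: "l1_norm (- x) = l1_norm x"
  unfolding l1_norm_def by simp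

lemma tails:
  fixes eps :: real and g :: "(real ^ 'n) measure"
  assumes g_sets: "sets g = sets borel"
    and priv: "lipschitz_private eps l1_norm (borel :: (real ^ 'n) measure) (additive_mech g)"
    and s: "s \<ge> 0"
  shows "measure g {v. 0 \<le> v $ i} \<le> exp (eps * s) * measure g {v. s \<le> v $ i}"
    and "measure g {v. v $ i \<le> 0} \<le> exp (eps * s) * measure g {v. v $ i \<le> -s}"
proof -
  have S1: "{v::real^'n. s \<le> v $ i} \<in> sets borel" by measurable
  have S2: "{v::real^'n. v $ i \<le> -s} \<in> sets borel" by measurable
  have "measure (additive_mech g (s *\<^sub>R axis i 1)) {v. s \<le> v $ i}
     \<le> exp (eps * l1_norm (s *\<^sub>R axis i 1 - 0)) * measure (additive_mech g 0) {v. s \<le> v $ i}"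
    using priv S1 unfolding lipschitz_private_def by blast
  then show "measure g {v. 0 \<le> v $ i} \<le> exp (eps * s) * measure g {v. s \<le> v $ i}"
    using s by (simp add: mech_measure[OF g_sets S1] l1_norm_axis l1_norm_uminus)
  have "measure (additive_mech g (-s *\<^sub>R axis i 1)) {v. v $ i \<le> -s}
     \<le> exp (eps * l1_norm (-s *\<^sub>R axis i 1 - 0)) * measure (additive_mech g 0) {v. v $ i \<le> -s}"
    using priv S2 unfolding lipschitz_private_def by blast
  then show "measure g {v. v $ i \<le> 0} \<le> exp (eps * s) * measure g {v. v $ i \<le> -s}"
    using s by (simp add: mech_measure[OF g_sets S2] l1_norm_axis l1_norm_uminus)
qed



lemma abs_tail:
  fixes eps :: real and g :: "(real ^ 'n) measure"
  assumes g_prob: "prob_space g" and g_sets: "sets g = sets borel"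
    and priv: "lipschitz_private eps l1_norm (borel :: (real ^ 'n) measure) (additive_mech g)"
    and s: "s \<ge> 0"
  shows "measure g {v. s \<le> \<bar>v $ i\<bar>} \<ge> exp (- eps * s)"
proof -
  interpret prob_space g by fact
  have sp: "space g = UNIV" using sets_eq_imp_space_eq[OF g_sets] by simp
  have [measurable_cong]: "sets g = sets borel" by fact
  have M: "{v. a \<le> v $ i} \<in> sets g" "{v. v $ i \<le> a} \<in> sets g" "{v. a \<le> \<bar>v $ i\<bar>} \<in> sets g" for a
    by (simp_all add: g_sets)
  show ?thesis
  proof (cases "s = 0")
    case True
    then show ?thesis using prob_space sp by simp
  next
    case False
    then have sp': "s > 0" using s by simp
    have "{v. s \<le> \<bar>v $ i\<bar>} = {v. s \<le> v $ i} \<union> {v. v $ i \<le> -s}" by auto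
    then have "measure g {v. s \<le> \<bar>v $ i\<bar>} = measure g {v. s \<le> v $ i} + measure g {v. v $ i \<le> -s}"
      using sp' M by (simp add: finite_measure_Union disjoint_iff)
    moreover have "measure g {v. 0 \<le> v $ i} \<le> exp (eps * s) * measure g {v. s \<le> v $ i}"
      "measure g {v. v $ i \<le> 0} \<le> exp (eps * s) * measure g {v. v $ i \<le> -s}"
      using tails[OF g_sets priv s] by auto
    moreover have "1 \<le> measure g {v. 0 \<le> v $ i} + measure g {v. v $ i \<le> 0}"
    proof -
      have "1 = measure g ({v. 0 \<le> v $ i} \<union> {v. v $ i \<le> 0})"
      proof -
        have "{v. 0 \<le> v $ i} \<union> {v. v $ i \<le> 0} = space g" using sp by auto
        then show ?thesis using prob_space by simp
      qed
      also have "\<dots> \<le> measure g {v. 0 \<le> v $ i} + measure g {v. v $ i \<le> 0}"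
        using M by (intro measure_Un_le) auto
      finally show ?thesis .
    qed
    ultimately have "1 \<le> exp (eps * s) * measure g {v. s \<le> \<bar>v $ i\<bar>}"
      by (simp add: algebra_simps)
    then have "exp (- eps * s) * 1 \<le> exp (- eps * s) * (exp (eps * s) * measure g {v. s \<le> \<bar>v $ i\<bar>})"
      by (intro mult_left_mono) auto
    then show ?thesis by (simp add: exp_minus field_simps)
  qed
qed



lemma vec_nth_measurable[measurable (raw)]:
  "f \<in> M \<rightarrow>\<^sub>M (borel :: (real ^ 'n) measure) \<Longrightarrow> (\<lambda>x. f x $ i) \<in> borel_measurable M"
proof -
  have "(\<lambda>x::real^'n. x $ i) \<in> borel_measurable borel"
    by (intro borel_measurable_continuous_onI continuous_intros)
  then show "f \<in> M \<rightarrow>\<^sub>M borel \<Longrightarrow> (\<lambda>x. f x $ i) \<in> borel_measurable M"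
    using measurable_compose by blast
qed

lemma sq_as_integral:
  fixes x :: real
  shows "ennreal (x\<^sup>2) = (\<integral>\<^sup>+ s. ennreal (2 * s) * indicator {0..\<bar>x\<bar>} s \<partial>lborel)"
proof -
  have "(\<integral>\<^sup>+ s. ennreal (2 * s) * indicator {0..\<bar>x\<bar>} s \<partial>lborel) = \<bar>x\<bar>\<^sup>2 - 0\<^sup>2"
    by (rule nn_integral_FTC_Icc[where F = "\<lambda>s. s\<^sup>2"]) (auto intro!: derivative_eq_intros)
  then show ?thesis by simp
qed

lemma coord_moment:
  fixes eps :: real and g :: "(real ^ 'n) measure"
  assumes e: "eps > 0" and g_prob: "prob_space g" and g_sets: "sets g = sets borel"
    and priv: "lipschitz_private eps l1_norm (borel :: (real ^ 'n) measure) (additive_mech g)"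
  shows "(\<integral>\<^sup>+ v. ennreal ((v $ i)\<^sup>2) \<partial>g) \<ge> ennreal (2 / eps\<^sup>2)"
proof -
  interpret g: prob_space g by fact
  interpret pair_sigma_finite g "lborel :: real measure"
    by (intro pair_sigma_finite.intro g.sigma_finite_measure_axioms lborel.sigma_finite_measure_axioms)
  have sp: "space g = UNIV" using sets_eq_imp_space_eq[OF g_sets] by simp
  have [measurable_cong]: "sets g = sets borel" by fact
  define F where "F v s = ennreal (2 * s) * indicator {0..\<bar>v $ i\<bar>} s" for v :: "real ^ 'n" and s :: real
  have Fm: "case_prod F \<in> borel_measurable (g \<Otimes>\<^sub>M lborel)"
  proof -
    have "case_prod F = (\<lambda>p. if 0 \<le> snd p \<and> snd p \<le> \<bar>fst p $ i\<bar> then ennreal (2 * snd p) else 0)"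
      by (auto simp: F_def fun_eq_iff split: split_indicator)
    also have "\<dots> \<in> borel_measurable (g \<Otimes>\<^sub>M lborel)" by measurable
    finally show ?thesis .
  qed
  have "(\<integral>\<^sup>+ v. ennreal ((v $ i)\<^sup>2) \<partial>g) = (\<integral>\<^sup>+ v. (\<integral>\<^sup>+ s. F v s \<partial>lborel) \<partial>g)"
    by (simp add: F_def sq_as_integral)
  also have "\<dots> = (\<integral>\<^sup>+ s. (\<integral>\<^sup>+ v. F v s \<partial>g) \<partial>lborel)"
    using Fubini'[OF Fm] by simp
  also have "\<dots> \<ge> (\<integral>\<^sup>+ s. ennreal (2 / eps) * (ennreal (eps * exp (- eps * s) * s ^ 1) * indicator {0..} s) \<partial>lborel)"
  proof (intro nn_integral_mono)
    fix s :: real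
    show "ennreal (2 / eps) * (ennreal (eps * exp (- eps * s) * s ^ 1) * indicator {0..} s) \<le> (\<integral>\<^sup>+ v. F v s \<partial>g)"
    proof (cases "s \<ge> 0")
      case True
      have "(\<integral>\<^sup>+ v. F v s \<partial>g) = (\<integral>\<^sup>+ v. ennreal (2 * s) * indicator {v. s \<le> \<bar>v $ i\<bar>} v \<partial>g)"
        using True by (intro nn_integral_cong) (auto simp: F_def split: split_indicator)
      also have "\<dots> = ennreal (2 * s) * emeasure g {v. s \<le> \<bar>v $ i\<bar>}"
        by (rule nn_integral_cmult_indicator) (simp add: g_sets)
      also have "\<dots> = ennreal (2 * s) * ennreal (measure g {v. s \<le> \<bar>v $ i\<bar>})"
        by (simp add: g.emeasure_eq_measure)
      also have "\<dots> \<ge> ennreal (2 * s) * ennreal (exp (- eps * s))"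
        using abs_tail[OF g_prob g_sets priv True, of i] by (intro mult_left_mono) auto
      also have "ennreal (2 * s) * ennreal (exp (- eps * s)) = ennreal (2 / eps) * (ennreal (eps * exp (- eps * s) * s ^ 1) * indicator {0..} s)"
        using True e by (simp add: ennreal_mult[symmetric])
      finally show ?thesis .
    qed simp
  qed
  also have "(\<integral>\<^sup>+ s. ennreal (2 / eps) * (ennreal (eps * exp (- eps * s) * s ^ 1) * indicator {0..} s) \<partial>lborel)
     = ennreal (2 / eps) * (\<integral>\<^sup>+ s. ennreal (eps * exp (- eps * s) * s ^ 1) * indicator {0..} s \<partial>lborel)"
    by (rule nn_integral_cmult) auto
  also have "\<dots> = ennreal (2 / eps) * ennreal (1 / eps)"
    using half_moment[OF e, of 1] by simp
  also have "\<dots> = ennreal (2 / eps\<^sup>2)"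
    using e by (simp add: ennreal_mult[symmetric] power2_eq_square)
  finally show ?thesis .
qed


theorem theorem2:
  fixes eps :: real and g :: "(real ^ 'n) measure"
  assumes eps_pos: "eps > 0"
    and g_prob: "prob_space g"
    and g_sets: "sets g = sets borel"
    and priv: "lipschitz_private eps l1_norm (borel :: (real ^ 'n) measure) (additive_mech g)"
  shows "(\<integral>\<^sup>+ v. ennreal ((norm v)\<^sup>2) \<partial>g)
           \<ge> (\<integral>\<^sup>+ v. ennreal ((norm v)\<^sup>2) \<partial>(density (lborel :: (real ^ 'n) measure) (\<lambda>v. ennreal (laplace_density eps v))))
       \<and> (\<integral>\<^sup>+ v. ennreal ((norm v)\<^sup>2) \<partial>(density (lborel :: (real ^ 'n) measure) (\<lambda>v. ennreal (laplace_density eps v))))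
           = ennreal (2 * real CARD('n) / eps\<^sup>2)"
proof -
  have [measurable_cong]: "sets g = sets borel" by (fact g_sets)
  have "(\<integral>\<^sup>+ v. ennreal ((norm v)\<^sup>2) \<partial>g) = (\<integral>\<^sup>+ v. (\<Sum>i\<in>UNIV. ennreal ((v $ i)\<^sup>2)) \<partial>g)"
    by (intro nn_integral_cong) (simp add: norm_sq_vec)
  also have "\<dots> = (\<Sum>i\<in>UNIV. (\<integral>\<^sup>+ v. ennreal ((v $ i)\<^sup>2) \<partial>g))"
    by (rule nn_integral_sum) auto
  also have "\<dots> \<ge> (\<Sum>i\<in>(UNIV :: 'n set). ennreal (2 / eps\<^sup>2))"
    by (intro sum_mono coord_moment[OF eps_pos g_prob g_sets priv])
  also have "(\<Sum>i\<in>(UNIV :: 'n set). ennreal (2 / eps\<^sup>2)) = ennreal (2 * real CARD('n) / eps\<^sup>2)"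
    using eps_pos by (simp add: ennreal_of_nat_eq_real_of_nat ennreal_mult[symmetric])
  finally have A: "(\<integral>\<^sup>+ v. ennreal ((norm v)\<^sup>2) \<partial>g) \<ge> ennreal (2 * real CARD('n) / eps\<^sup>2)" .
  have B: "(\<integral>\<^sup>+ v. ennreal ((norm v)\<^sup>2) \<partial>(density (lborel :: (real ^ 'n) measure) (\<lambda>v. ennreal (laplace_density eps v))))
           = ennreal (2 * real CARD('n) / eps\<^sup>2)"
    by (rule laplace_moment[OF eps_pos])
  show ?thesis using A B by simp
qed

end
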